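(* Let $f:[0,\infty)\to\mathbb{R}$ be differentiable, let $0<a<b<\infty$, and suppose $f'$ is Lebesgue integrable on $[a,b]$. Let $(\alpha,m)\in(0,1]^2$ and $q\ge 1$, and suppose $|f'|^q$ is $(\alpha,m)$-GA-convex on $[0,\max\{a^{1/m},b\}]$. Then \[ \biggl|\frac{b^2f(b)-a^2f(a)}{2}-\int_a^b xf(x)\,dx\biggr|\le\frac{\ln b-\ln a}{2}\bigl[L(a^3,b^3)\bigr]^{1-1/q}\Bigl\{m\bigl[L(a^3,b^3)-G(\alpha,3)\bigr]\bigl|f'(a^{1/m})\bigr|^q+G(\alpha,3)|f'(b)|^q\Bigr\}^{1/q}. \]
   Context: For $c>0$, $h:[0,c]\to\mathbb{R}$ and $(\alpha,m)\in(0,1]^2$, $h$ is called $(\alpha,m)$-GA-convex on $[0,c]$ if $h\bigl(x^\lambda y^{m(1-\lambda)}\bigr)\le\lambda^\alpha h(x)+m(1-\lambda^\alpha)h(y)$ for all $x,y\in[0,c]$ and all $\lambda\in[0,1]$ (with the convention $0^0=1$). For fixed $0<a<b$ and $\ell\ge0$, $\alpha>0$, set $G(\alpha,\ell)=\int_0^1 t^\alpha a^{\ell(1-t)}b^{\ell t}\,dt$. For $x,y>0$, $x\neq y$, the logarithmic mean is $L(x,y)=\frac{y-x}{\ln y-\ln x}$. *)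

theory Defs
  imports "HOL-Analysis.Analysis"
begin

text \<open>Real power with the convention 0^0 = 1 (Isabelle's powr has 0 powr 0 = 0).\<close>
definition rpow0 :: "real \<Rightarrow> real \<Rightarrow> real" where
  "rpow0 x t = (if t = 0 then 1 else x powr t)"

definition GA_convex :: "real \<Rightarrow> real \<Rightarrow> real \<Rightarrow> (real \<Rightarrow> real) \<Rightarrow> bool" where
  "GA_convex \<alpha> m c h \<longleftrightarrow>
     (\<forall>x\<in>{0..c}. \<forall>y\<in>{0..c}. \<forall>t\<in>{0..1}.
        h (rpow0 x t * rpow0 y (m * (1 - t)))
          \<le> rpow0 t \<alpha> * h x + m * (1 - rpow0 t \<alpha>) * h y)"

definition Gfun :: "real \<Rightarrow> real \<Rightarrow> real \<Rightarrow> real \<Rightarrow> real" where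
  "Gfun a b \<alpha> l = integral {0..1} (\<lambda>t. t powr \<alpha> * a powr (l * (1 - t)) * b powr (l * t))"

definition logmean :: "real \<Rightarrow> real \<Rightarrow> real" where
  "logmean x y = (y - x) / (ln y - ln x)"

end

theory Submission
  imports Defs
begin

lemma amgm_aux:
  fixes u s q :: real
  assumes u: "u \<ge> 0" and s: "s > 0" and q: "q \<ge> 1"
  shows "u \<le> (1 - 1/q) * s + (1/q) * (s powr (1 - q) * u powr q)"
proof (cases "u = 0")
  case True
  then show ?thesis using s q by (simp add: divide_simps)
next
  case False
  then have u0: "u > 0" using u by simp
  have "(s powr (1 - q) * u powr q) powr (1/q) * s powr (1 - 1/q)
        \<le> (1/q) * (s powr (1 - q) * u powr q) + (1 - 1/q) * s"
    using q s u0 by (intro Youngs_inequality_0) (auto simp: divide_simps)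
  moreover have "(s powr (1 - q) * u powr q) powr (1/q) * s powr (1 - 1/q) = u"
  proof -
    have "(s powr (1 - q) * u powr q) powr (1/q) * s powr (1 - 1/q)
        = s powr ((1 - q)/q) * u * s powr (1 - 1/q)"
      using s u0 q by (simp add: powr_mult powr_powr)
    also have "\<dots> = u * s powr ((1 - q)/q + (1 - 1/q))"
      using s by (simp add: powr_add)
    also have "(1 - q)/q + (1 - 1/q) = 0" using q by (simp add: field_simps)
    finally show ?thesis using s by simp
  qed
  ultimately show ?thesis by simp
qed

lemma holder_final:
  fixes X A B q :: real
  assumes A: "A > 0" and B: "B \<ge> 0" and q: "q \<ge> 1"
    and H: "\<And>s. s > 0 \<Longrightarrow> X \<le> (1 - 1/q) * s * A + (1/q) * (s powr (1 - q) * B)"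
  shows "X \<le> A powr (1 - 1/q) * B powr (1/q)"
proof (cases "B = 0")
  case True
  show ?thesis
  proof (cases "q = 1")
    case True
    with H[of 1] \<open>B = 0\<close> show ?thesis by simp
  next
    case False
    show ?thesis
    proof (rule ccontr)
      assume "\<not> ?thesis"
      then have X: "X > 0" using \<open>B = 0\<close> by simp
      have "X \<le> (1 - 1/q) * (X / (2*A)) * A" using H[of "X/(2*A)"] X A \<open>B = 0\<close> by simp
      also have "\<dots> = (1 - 1/q) * X / 2" using A by simp
      also have "\<dots> < X" using X q by (simp add: field_simps) (smt (verit) mult_nonneg_nonneg)
      finally show False by simp
    qed
  qed
next
  case False
  then have B0: "B > 0" using B by simp
  define s where "s = (B/A) powr (1/q)"
  have s0: "s > 0" using A B0 by (simp add: s_def)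
  have s': "s = B powr (1/q) * A powr (-(1/q))"
    unfolding s_def using A B0 by (subst powr_divide) (auto simp: powr_minus divide_inverse)
  have e1: "s * A = A powr (1 - 1/q) * B powr (1/q)"
  proof -
    have "s * A = B powr (1/q) * A powr (-(1/q)) * A powr 1"
      using A B0 by (simp add: s')
    also have "\<dots> = B powr (1/q) * A powr (1 - 1/q)"
      by (simp only: mult.assoc powr_add[symmetric]) (simp add: algebra_simps)
    finally show ?thesis by simp
  qed
  have e2: "s powr (1 - q) * B = A powr (1 - 1/q) * B powr (1/q)"
  proof -
    have "s powr (1 - q) * B = (B powr (1/q) * A powr (-(1/q))) powr (1 - q) * B powr 1"
      using A B0 by (simp add: s')
    also have "\<dots> = B powr ((1/q)*(1 - q)) * A powr ((-(1/q))*(1-q)) * B powr 1"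
      using A B0 by (simp add: powr_mult powr_powr)
    also have "\<dots> = A powr ((-(1/q))*(1-q)) * B powr ((1/q)*(1 - q) + 1)"
      by (simp add: powr_add)
    also have "(-(1/q))*(1-q) = 1 - 1/q" using q by (simp add: field_simps)
    also have "(1/q)*(1 - q) + 1 = 1/q" using q by (simp add: field_simps)
    finally show ?thesis .
  qed
  have "X \<le> (1 - 1/q) * s * A + (1/q) * (s powr (1 - q) * B)" using H s0 by simp
  also have "\<dots> = A powr (1 - 1/q) * B powr (1/q)"
    using e1 e2 q by (simp add: field_simps mult.assoc)
  finally show ?thesis .
qed

lemma rpow0_exp: "x > 0 \<Longrightarrow> rpow0 x t = exp (t * ln x)"
  by (simp add: rpow0_def powr_def)

theorem theorem3p1:
  fixes f f' :: "real \<Rightarrow> real" and a b \<alpha> m q :: real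
  assumes deriv: "\<And>x. x \<ge> 0 \<Longrightarrow> (f has_real_derivative f' x) (at x within {0..})"
    and ab: "0 < a" "a < b"
    and integ: "set_integrable lborel {a..b} f'"
    and \<alpha>: "0 < \<alpha>" "\<alpha> \<le> 1" and m: "0 < m" "m \<le> 1"
    and q: "q \<ge> 1"
    and conv: "GA_convex \<alpha> m (max (a powr (1/m)) b) (\<lambda>x. \<bar>f' x\<bar> powr q)"
  shows "\<bar>(b^2 * f b - a^2 * f a) / 2 - integral {a..b} (\<lambda>x. x * f x)\<bar>
    \<le> (ln b - ln a) / 2 * (logmean (a^3) (b^3)) powr (1 - 1/q)
       * (m * (logmean (a^3) (b^3) - Gfun a b \<alpha> 3) * \<bar>f' (a powr (1/m))\<bar> powr q
          + Gfun a b \<alpha> 3 * \<bar>f' b\<bar> powr q) powr (1/q)"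
proof -
  define c where "c = ln b - ln a"
  have c0: "c > 0" using ab by (simp add: c_def)
  define \<phi> where "\<phi> t = exp (ln a + t * c)" for t
  define w where "w t = (\<phi> t)^3" for t
  define L where "L = logmean (a^3) (b^3)"
  define G where "G = Gfun a b \<alpha> 3"
  define P where "P = \<bar>f' b\<bar> powr q"
  define Q where "Q = \<bar>f' (a powr (1/m))\<bar> powr q"
  have \<phi>0: "\<phi> 0 = a" using ab by (simp add: \<phi>_def)
  have \<phi>1: "\<phi> 1 = b" using ab by (simp add: \<phi>_def c_def)
  have \<phi>pos: "\<phi> t > 0" for t by (simp add: \<phi>_def)
  have \<phi>ab: "\<phi> t \<in> {a..b}" if "t \<in> {0..1}" for t
  proof -
    have "t * c \<ge> 0" "t * c \<le> c" using that c0 by (auto simp: mult_left_le_one_le)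
    then have "\<phi> 0 \<le> \<phi> t" "\<phi> t \<le> \<phi> 1" unfolding \<phi>_def by auto
    then show ?thesis using \<phi>0 \<phi>1 by simp
  qed
  have \<phi>d: "(\<phi> has_real_derivative c * \<phi> t) (at t within S)" for t S
    unfolding \<phi>_def by (auto intro!: derivative_eq_intros)
  define K where "K x = x^2 * f x / 2 - integral {a..x} (\<lambda>s. s * f s)" for x
  have fd: "(f has_real_derivative f' x) (at x within {a..b})" if "x \<in> {a..b}" for x
    using deriv[of x] that ab by (auto intro: DERIV_subset)
  have fc: "continuous_on {a..b} f" by (rule DERIV_continuous_on[OF fd])
  have Kd: "(K has_real_derivative x^2 * f' x / 2) (at x within {a..b})" if x: "x \<in> {a..b}" for x
  proof -
    have d1: "((\<lambda>x. x^2 * f x / 2) has_real_derivative (2*x*f x + x^2 * f' x)/2) (at x within {a..b})"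
      using fd[OF x] by (auto intro!: derivative_eq_intros simp: field_simps)
    have "continuous_on {a..b} (\<lambda>s. s * f s)" using fc by (intro continuous_intros)
    from integral_has_vector_derivative[OF this x]
    have d2: "((\<lambda>u. integral {a..u} (\<lambda>s. s * f s)) has_real_derivative x * f x) (at x within {a..b})"
      by (simp add: has_real_derivative_iff_has_vector_derivative)
    show ?thesis unfolding K_def
      by (rule DERIV_cong[OF DERIV_diff[OF d1 d2]]) (simp add: field_simps power2_eq_square)
  qed
  define h where "h t = (\<phi> t)^2 * f' (\<phi> t) / 2 * (c * \<phi> t)" for t
  have hK: "(h has_integral (K b - K a)) {0..1}"
  proof -
    have "((K \<circ> \<phi>) has_real_derivative h t) (at t within {0..1})" if t: "t \<in> {0..1}" for t
    proof -
      have "(K has_real_derivative (\<phi> t)^2 * f' (\<phi> t) / 2) (at (\<phi> t) within \<phi> ` {0..1})"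
        using Kd[OF \<phi>ab[OF t]] \<phi>ab by (auto intro: DERIV_subset)
      from DERIV_image_chain[OF this \<phi>d] show ?thesis by (simp add: h_def)
    qed
    then have "(h has_integral ((K \<circ> \<phi>) 1 - (K \<circ> \<phi>) 0)) {0..1}"
      by (intro fundamental_theorem_of_calculus)
         (auto simp: has_real_derivative_iff_has_vector_derivative[symmetric] o_def)
    then show ?thesis using \<phi>0 \<phi>1 by simp
  qed
  have lhs: "(b^2 * f b - a^2 * f a) / 2 - integral {a..b} (\<lambda>x. x * f x) = K b - K a"
    by (simp add: K_def field_simps)
  have convb: "\<bar>f' (\<phi> t)\<bar> powr q \<le> t powr \<alpha> * P + m * (1 - t powr \<alpha>) * Q"
    if t: "t \<in> {0..1}" for t
  proof -
    have ba: "b \<in> {0..max (a powr (1/m)) b}" "a powr (1/m) \<in> {0..max (a powr (1/m)) b}"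
      using ab by auto
    have e: "rpow0 b t * rpow0 (a powr (1/m)) (m * (1 - t)) = \<phi> t"
    proof -
      have "rpow0 b t * rpow0 (a powr (1/m)) (m * (1 - t))
          = exp (t * ln b) * exp (m * (1 - t) * ((1/m) * ln a))"
        using ab by (simp add: rpow0_exp)
      also have "\<dots> = exp (t * ln b + m * (1 - t) * ((1/m) * ln a))" by (simp add: exp_add)
      also have "t * ln b + m * (1 - t) * ((1/m) * ln a) = ln a + t * c"
        using m by (simp add: c_def field_simps)
      finally show ?thesis by (simp add: \<phi>_def)
    qed
    have r: "rpow0 t \<alpha> = t powr \<alpha>" using \<alpha> by (simp add: rpow0_def)
    from conv ba t have "\<bar>f' (rpow0 b t * rpow0 (a powr (1/m)) (m * (1 - t)))\<bar> powr q
        \<le> rpow0 t \<alpha> * \<bar>f' b\<bar> powr q + m * (1 - rpow0 t \<alpha>) * \<bar>f' (a powr (1/m))\<bar> powr q"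
      unfolding GA_convex_def by blast
    then show ?thesis using e r by (simp add: P_def Q_def)
  qed
  have wform: "a powr (3 * (1 - t)) * b powr (3 * t) = w t" for t
  proof -
    have "a powr (3 * (1 - t)) * b powr (3 * t) = exp (3 * (1 - t) * ln a + 3 * t * ln b)"
      using ab by (simp add: powr_def exp_add)
    also have "\<dots> = exp (of_nat 3 * (ln a + t * c))" by (simp add: c_def algebra_simps)
    also have "\<dots> = w t" unfolding exp_of_nat_mult w_def \<phi>_def ..
    finally show ?thesis .
  qed
  have Gdef: "G = integral {0..1} (\<lambda>t. t powr \<alpha> * w t)"
    unfolding G_def Gfun_def by (simp only: mult.assoc wform)
  have wc: "continuous_on {0..1} w" unfolding w_def \<phi>_def by (intro continuous_intros)
  have tac: "continuous_on {0..1} (\<lambda>t. t powr \<alpha>)"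
    using \<alpha> by (intro continuous_on_powr') (auto intro: continuous_intros)
  have wG: "((\<lambda>t. t powr \<alpha> * w t) has_integral G) {0..1}"
    unfolding Gdef using tac wc
    by (intro integrable_integral integrable_continuous_interval continuous_on_mult[OF tac wc])
  have wL: "(w has_integral L) {0..1}"
  proof -
    have "((\<lambda>t. (\<phi> t)^3 / (3*c)) has_real_derivative w t) (at t within {0..1})" for t
      using c0 by (auto intro!: derivative_eq_intros \<phi>d simp: w_def field_simps power2_eq_square power3_eq_cube)
    then have "(w has_integral ((\<phi> 1)^3 / (3*c) - (\<phi> 0)^3/(3*c))) {0..1}"
      by (intro fundamental_theorem_of_calculus)
         (auto simp: has_real_derivative_iff_has_vector_derivative[symmetric])
    moreover have "(\<phi> 1)^3 / (3*c) - (\<phi> 0)^3/(3*c) = L"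
      using ab by (simp add: \<phi>0 \<phi>1 L_def logmean_def c_def ln_realpow diff_divide_distrib)
    ultimately show ?thesis by simp
  qed
  have L0: "L > 0"
  proof -
    have "a^3 < b^3" using ab by (simp add: power_strict_mono)
    then show ?thesis using ab by (simp add: L_def logmean_def ln_realpow)
  qed
  define B where "B = m * (L - G) * Q + G * P"
  have P0: "P \<ge> 0" and Q0: "Q \<ge> 0" by (simp_all add: P_def Q_def)
  have wpos: "w t > 0" for t using \<phi>pos by (simp add: w_def)
  have tal: "0 \<le> t powr \<alpha>" "t powr \<alpha> \<le> 1" if "t \<in> {0..1}" for t
    using that \<alpha> by (auto intro: powr_le1)
  define v where "v t = w t * (t powr \<alpha> * P + m * (1 - t powr \<alpha>) * Q)" for t
  have wB: "(v has_integral B) {0..1}"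
  proof -
    have "((\<lambda>t. (m*Q) * w t + (P - m*Q) * (t powr \<alpha> * w t)) has_integral ((m*Q)*L + (P - m*Q)*G)) {0..1}"
      by (intro has_integral_add has_integral_mult_right wL wG)
    moreover have "(\<lambda>t. (m*Q) * w t + (P - m*Q) * (t powr \<alpha> * w t)) = v"
      by (rule ext) (simp add: v_def algebra_simps)
    moreover have "(m*Q)*L + (P - m*Q)*G = B" by (simp add: B_def algebra_simps)
    ultimately show ?thesis by simp
  qed
  have B0: "B \<ge> 0"
  proof (rule has_integral_nonneg[OF wB])
    fix t :: real assume t: "t \<in> {0..1}"
    have "0 \<le> t powr \<alpha> * P + m * (1 - t powr \<alpha>) * Q"
      using tal[OF t] P0 Q0 m by (intro add_nonneg_nonneg mult_nonneg_nonneg) auto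
    then show "0 \<le> v t" using wpos[of t] by (simp add: v_def)
  qed
  have main: "\<bar>K b - K a\<bar> / (c/2) \<le> (1 - 1/q) * s * L + (1/q) * (s powr (1 - q) * B)"
    if s: "s > 0" for s
  proof -
    define bnd where "bnd t = c/2 * ((1 - 1/q) * s * w t + (1/q) * s powr (1 - q) * v t)" for t
    have bi: "(bnd has_integral (c/2 * ((1 - 1/q) * s * L + (1/q) * s powr (1 - q) * B))) {0..1}"
      unfolding bnd_def by (intro has_integral_add has_integral_mult_right wL wB)
    have pw: "norm (h t) \<le> bnd t" if t: "t \<in> {0..1}" for t
    proof -
      define u where "u = \<bar>f' (\<phi> t)\<bar>"
      have hu: "\<bar>h t\<bar> = c/2 * w t * u"
        using c0 \<phi>pos[of t] by (simp add: h_def u_def w_def abs_mult power2_eq_square power3_eq_cube)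
      have "u \<le> (1 - 1/q) * s + (1/q) * (s powr (1 - q) * u powr q)"
        by (rule amgm_aux) (use s q in \<open>auto simp: u_def\<close>)
      also have "\<dots> \<le> (1 - 1/q) * s + (1/q) * (s powr (1 - q) * (t powr \<alpha> * P + m * (1 - t powr \<alpha>) * Q))"
        using convb[OF t] q by (auto simp: u_def intro!: mult_left_mono divide_right_mono)
      finally have "c/2 * w t * u \<le> c/2 * w t * ((1 - 1/q) * s + (1/q) * (s powr (1 - q) * (t powr \<alpha> * P + m * (1 - t powr \<alpha>) * Q)))"
        using c0 wpos[of t] by (intro mult_left_mono) auto
      then show ?thesis unfolding real_norm_def hu by (simp add: bnd_def v_def algebra_simps)
    qed
    have "norm (integral {0..1} h) \<le> integral {0..1} bnd"
      using hK bi pw by (intro integral_norm_bound_integral) auto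
    then have "\<bar>K b - K a\<bar> \<le> c/2 * ((1 - 1/q) * s * L + (1/q) * s powr (1 - q) * B)"
      using hK bi by (simp add: integral_unique)
    then show ?thesis using c0 by (simp add: divide_simps mult.commute mult.left_commute)
  qed
  have "\<bar>K b - K a\<bar> / (c/2) \<le> L powr (1 - 1/q) * B powr (1/q)"
    by (rule holder_final[OF L0 B0 q main])
  then have "\<bar>K b - K a\<bar> \<le> c/2 * L powr (1 - 1/q) * B powr (1/q)"
    using c0 by (simp add: divide_simps mult.commute mult.left_commute)
  then show ?thesis by (simp add: lhs c_def L_def B_def G_def P_def Q_def)
qed

end
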